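(* Let $f=a_0+a_1x+\cdots+a_nx^n\in\mathbb{Z}[x]$ be a primitive polynomial. Suppose that $a_0=\pm p^k d$ and $\gcd(a_0,a_1)=p^k$ for some positive integers $k$ and $d$ and a prime number $p$, where $p\nmid a_2 d$ and $k$ is odd, and that every zero $\theta\in\mathbb{C}$ of $f$ satisfies $|\theta|>d$. Then $f$ is irreducible in $\mathbb{Z}[x]$.
   Context: A polynomial $a_0+a_1x+\cdots+a_nx^n\in\mathbb{Z}[x]$ is primitive if $\gcd(a_0,a_1,\ldots,a_n)=1$. Coefficients $a_i$ with $i>n$ are taken to be $0$. *)

theory Defs
  imports "HOL-Analysis.Analysis" "HOL-Computational_Algebra.Computational_Algebra"
begin

end

theory Submission
  imports Defs
begin

lemma root_bound:
  fixes g :: "int poly" and d :: int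
  assumes deg: "degree g > 0" and dpos: "d > 0"
    and rt: "\<And>z. poly (map_poly of_int g) z = 0 \<Longrightarrow> cmod z > of_int d"
  shows "\<bar>coeff g 0\<bar> > d"
proof -
  define G where "G = (map_poly of_int g :: complex poly)"
  have degG: "degree G = degree g" unfolding G_def by (simp add: degree_map_poly)
  have lcG: "lead_coeff G = of_int (lead_coeff g)" unfolding G_def by (simp add: degG[unfolded G_def] coeff_map_poly)
  obtain root where dec: "smult (lead_coeff G) (\<Prod>i<degree G. [:-root i, 1:]) = G"
    using complex_poly_decompose' by blast
  have rts: "cmod (root i) > of_int d" if "i < degree G" for i
  proof -
    have "poly G (root i) = lead_coeff G * (\<Prod>j<degree G. poly [:-root j, 1:] (root i))"
      by (subst dec[symmetric]) (simp add: poly_prod)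
    also have "(\<Prod>j<degree G. poly [:-root j, 1:] (root i)) = 0"
      using that by (intro prod_zero) auto
    finally show ?thesis using rt G_def by simp
  qed
  have c0: "coeff G 0 = lead_coeff G * (\<Prod>i<degree G. - root i)"
    by (subst dec[symmetric]) (simp add: coeff_0_prod_list poly_0_coeff_0[symmetric] poly_prod)
  have "cmod (coeff G 0) = cmod (lead_coeff G) * (\<Prod>i<degree G. cmod (root i))"
    by (simp add: c0 norm_mult prod_norm[symmetric])
  moreover have "cmod (lead_coeff G) \<ge> 1"
  proof -
    have "lead_coeff g \<noteq> 0" using deg by auto
    then have "\<bar>lead_coeff g\<bar> \<ge> 1" by linarith
    then show ?thesis by (simp add: lcG)
  qed
  moreover have "(\<Prod>i<degree G. cmod (root i)) > of_int d"
  proof -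
    have sp: "{..<degree G} = insert 0 {1..<degree G}" using deg degG by auto
    have "(\<Prod>i<degree G. cmod (root i)) = cmod (root 0) * (\<Prod>i\<in>{1..<degree G}. cmod (root i))"
      by (subst sp) simp
    moreover have "(\<Prod>i\<in>{1..<degree G}. cmod (root i)) \<ge> 1"
      by (rule prod_ge_1) (use rts dpos in force)
    moreover have "cmod (root 0) > of_int d" using rts deg degG by simp
    ultimately show ?thesis using dpos
      by (smt (verit) mult_le_cancel_left1 of_int_pos)
  qed
  ultimately have "cmod (coeff G 0) > of_int d" using dpos
    by (smt (verit) mult_le_cancel_right1 of_int_pos)
  moreover have "cmod (coeff G 0) = of_int \<bar>coeff g 0\<bar>" unfolding G_def
    by (simp add: coeff_map_poly)
  ultimately show ?thesis by simp
qed

lemma val_step: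
  fixes p b0 c0 b1 c1 :: int
  assumes pp: "prime p" and b0: "b0 \<noteq> 0" and c0: "c0 \<noteq> 0"
    and st: "multiplicity p b0 < multiplicity p c0"
    and sk: "multiplicity p b0 + multiplicity p c0 = k"
    and a1: "p ^ k dvd b0 * c1 + b1 * c0"
    and nc1: "\<not> p dvd c1"
  shows False
proof -
  define s where "s = multiplicity p b0"
  have c1: "c1 \<noteq> 0" using nc1 by auto
  have "p ^ Suc s dvd c0" using st s_def by (intro multiplicity_dvd') simp
  hence h1: "p ^ Suc s dvd b1 * c0" by simp
  have "Suc s \<le> k" using st sk s_def by simp
  hence "p ^ Suc s dvd p ^ k" by (rule le_imp_power_dvd)
  hence "p ^ Suc s dvd b0 * c1 + b1 * c0" using a1 by (rule dvd_trans)
  hence "p ^ Suc s dvd b0 * c1" using h1 by (simp add: dvd_add_left_iff)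
  hence "multiplicity p (b0 * c1) \<ge> Suc s"
    by (intro multiplicity_geI) (use b0 c1 pp in \<open>auto simp: prime_elem_def\<close>)
  moreover have "multiplicity p (b0 * c1) = s"
    using prime_elem_multiplicity_mult_distrib[OF prime_imp_prime_elem[OF pp] b0 c1] nc1 s_def
    by (simp add: not_dvd_imp_multiplicity_0)
  ultimately show False by simp
qed

lemma claim:
  fixes p b0 c0 b1 c1 b2 c2 d :: int
  assumes pp: "prime p" and ko: "odd k"
    and prod: "b0 * c0 = p ^ k * d \<or> b0 * c0 = - (p ^ k * d)"
    and nd: "\<not> p dvd d"
    and a1: "p ^ k dvd b0 * c1 + b1 * c0"
    and a2: "\<not> p dvd (b0 * c2 + b1 * c1 + b2 * c0)"
  shows "\<not> p dvd b0 \<or> \<not> p dvd c0"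
proof (rule ccontr)
  assume "\<not> (\<not> p dvd b0 \<or> \<not> p dvd c0)"
  hence pb0: "p dvd b0" and pc0: "p dvd c0" by auto
  have "\<not> p dvd b1 * c1"
  proof
    assume "p dvd b1 * c1"
    hence "p dvd b0 * c2 + b1 * c1 + b2 * c0" using pb0 pc0 by simp
    thus False using a2 by simp
  qed
  hence nb1: "\<not> p dvd b1" and nc1: "\<not> p dvd c1" by auto
  have d0: "d \<noteq> 0" using nd by auto
  have p0: "p \<noteq> 0" using pp by auto
  have pk0: "p ^ k * d \<noteq> 0" using d0 p0 by simp
  have b0: "b0 \<noteq> 0" and c0: "c0 \<noteq> 0" using prod pk0 by auto
  have "multiplicity p (b0 * c0) = multiplicity p (p ^ k * d)"
    using prod by auto
  also have "\<dots> = multiplicity p (p ^ k) + multiplicity p d"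
    using prime_elem_multiplicity_mult_distrib[OF prime_imp_prime_elem[OF pp] _ d0, of "p ^ k"] p0 by simp
  also have "\<dots> = k" using nd multiplicity_prime_power[OF prime_imp_prime_elem[OF pp]] by (simp add: not_dvd_imp_multiplicity_0)
  finally have sk: "multiplicity p b0 + multiplicity p c0 = k"
    using prime_elem_multiplicity_mult_distrib[OF prime_imp_prime_elem[OF pp] b0 c0] by simp
  have "multiplicity p b0 \<noteq> multiplicity p c0" using sk ko by presburger
  hence "multiplicity p b0 < multiplicity p c0 \<or> multiplicity p c0 < multiplicity p b0" by linarith
  thus False
  proof
    assume "multiplicity p b0 < multiplicity p c0"
    thus False using val_step[OF pp b0 c0 _ sk a1 nc1] by simp
  next
    assume "multiplicity p c0 < multiplicity p b0"
    moreover have "p ^ k dvd c0 * b1 + c1 * b0" using a1 by (simp add: ac_simps)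
    ultimately show False using val_step[OF pp c0 b0 _ _ _ nb1, of k c1] sk by simp
  qed
qed

lemma small:
  fixes p b0 c0 d :: int
  assumes pp: "prime p" and dpos: "d > 0"
    and prod: "b0 * c0 = p ^ k * d \<or> b0 * c0 = - (p ^ k * d)"
    and nb: "\<not> p dvd b0"
  shows "\<bar>b0\<bar> \<le> d"
proof -
  have "coprime (p ^ k) b0" using pp nb by (simp add: prime_imp_coprime)
  moreover have "p ^ k dvd b0 * c0" using prod by auto
  ultimately have "p ^ k dvd c0" by (metis coprime_dvd_mult_right_iff)
  then obtain e where e: "c0 = p ^ k * e" by blast
  have p0: "p ^ k \<noteq> 0" using pp by auto
  have "p ^ k * (b0 * e) = p ^ k * d \<or> p ^ k * (b0 * e) = p ^ k * (- d)"
    using prod unfolding e by (simp add: ac_simps)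
  hence "b0 * e = d \<or> b0 * e = - d" using p0 by (metis mult_cancel_left)
  hence "b0 dvd d" by (metis dvd_minus_iff dvd_triv_left)
  thus ?thesis using dpos dvd_imp_le_int[of d b0] by simp
qed

lemma coeff_mult_1: "coeff (g * h) 1 = coeff g 0 * coeff h 1 + coeff g 1 * coeff h 0"
  for g h :: "int poly"
  by (simp add: coeff_mult atMost_Suc)

lemma coeff_mult_2: "coeff (g * h) 2 = coeff g 0 * coeff h 2 + coeff g 1 * coeff h 1 + coeff g 2 * coeff h 0"
  for g h :: "int poly"
  by (simp add: coeff_mult atMost_Suc numeral_2_eq_2)

lemma map_poly_of_int_mult:
  "map_poly (of_int :: int \<Rightarrow> complex) (p * q) = map_poly of_int p * map_poly of_int q"
  by (rule poly_eqI) (simp add: coeff_mult coeff_map_poly)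

theorem theorem23:
  fixes f :: "int poly" and p :: int and k :: nat and d :: int
  assumes primitive: "content f = 1"
    and prime_p: "prime p"
    and k_pos: "k > 0" and k_odd: "odd k"
    and d_pos: "d > 0"
    and a0: "coeff f 0 = p ^ k * d \<or> coeff f 0 = - (p ^ k * d)"
    and gcd01: "gcd (coeff f 0) (coeff f 1) = p ^ k"
    and ndvd: "\<not> p dvd (coeff f 2 * d)"
    and roots: "\<And>\<theta> :: complex. poly (map_poly of_int f) \<theta> = 0 \<Longrightarrow> cmod \<theta> > of_int d"
  shows "irreducible f"
proof -
  have p1: "p > 1" using prime_p prime_gt_1_int by blast
  have pk: "p ^ k > 1" using p1 k_pos by simp
  have absa0: "\<bar>coeff f 0\<bar> > 1" using a0 pk d_pos
    by (smt (verit) mult_le_cancel_left1)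
  have nd: "\<not> p dvd d" and na2: "\<not> p dvd coeff f 2" using ndvd by auto
  have pa1: "p ^ k dvd coeff f 1" using gcd01 by (metis gcd_dvd2)
  have f0: "f \<noteq> 0" using absa0 by auto
  have fnu: "\<not> is_unit f"
  proof
    assume "is_unit f"
    then obtain c where "f = [:c:]" "c dvd 1" by (auto simp: is_unit_poly_iff)
    thus False using absa0 by auto
  qed
  have const_unit: "is_unit g" if "degree g = 0" "g dvd f" for g :: "int poly"
  proof -
    have "g = [:coeff g 0:]" using that(1) by (metis degree_0_id)
    hence "[:coeff g 0:] dvd f" using that(2) by simp
    hence "coeff g 0 dvd 1" using primitive by (simp add: const_poly_dvd_iff_dvd_content)
    thus ?thesis using \<open>g = _\<close> by (metis is_unit_const_poly_iff)
  qed
  show ?thesis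
  proof (rule irreducibleI)
    show "f \<noteq> 0" by (rule f0)
    show "\<not> is_unit f" by (rule fnu)
    fix g h assume fgh: "f = g * h"
    show "is_unit g \<or> is_unit h"
    proof (rule ccontr)
      assume nu: "\<not> (is_unit g \<or> is_unit h)"
      have dg: "degree g > 0" using const_unit[of g] nu fgh by auto
      have dh: "degree h > 0" using const_unit[of h] nu fgh by auto
      have rg: "cmod z > of_int d" if "poly (map_poly of_int g) z = 0" for z
        using roots[of z] that fgh by (simp add: map_poly_of_int_mult)
      have rh: "cmod z > of_int d" if "poly (map_poly of_int h) z = 0" for z
        using roots[of z] that fgh by (simp add: map_poly_of_int_mult)
      have prod: "coeff g 0 * coeff h 0 = p ^ k * d \<or> coeff g 0 * coeff h 0 = - (p ^ k * d)"
        using a0 fgh by (simp add: coeff_mult_0)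
      have c1: "p ^ k dvd coeff g 0 * coeff h 1 + coeff g 1 * coeff h 0"
        using pa1 fgh coeff_mult_1 by metis
      have c2: "\<not> p dvd (coeff g 0 * coeff h 2 + coeff g 1 * coeff h 1 + coeff g 2 * coeff h 0)"
        using na2 fgh coeff_mult_2 by metis
      from claim[OF prime_p k_odd prod nd c1 c2]
      show False
      proof
        assume "\<not> p dvd coeff g 0"
        hence "\<bar>coeff g 0\<bar> \<le> d" using small[OF prime_p d_pos prod] by blast
        thus False using root_bound[OF dg d_pos rg] by simp
      next
        assume "\<not> p dvd coeff h 0"
        moreover have "coeff h 0 * coeff g 0 = p ^ k * d \<or> coeff h 0 * coeff g 0 = - (p ^ k * d)"
          using prod by (simp add: ac_simps)
        ultimately have "\<bar>coeff h 0\<bar> \<le> d" using small[OF prime_p d_pos] by blast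
        thus False using root_bound[OF dh d_pos rh] by simp
      qed
    qed
  qed
qed

end
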